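(* Let $F\subset\mathbb{Z}$ be a finite union of intervals of length $n$, and let $a=|\{s\in\mathbb{Z}: s+[0,n)\subset F\}|$. Suppose $u\in\mathcal{A}^F$ satisfies $|W_n(u)|=j<a$. Then every $n$-repeat cover $\mathcal{R}$ for $u$ satisfies $|A(\mathcal{R})|\ge a+n-j-1$.
   Context: $\mathcal{A}$ is a finite alphabet. Intervals are integer intervals, e.g. $[0,n)=\{0,\dots,n-1\}$, and $t+I=\{t+s:s\in I\}$. For $F\subset\mathbb{Z}$, $\mathcal{C}_n(F)=\{t+[0,n): t+[0,n)\subset F\}$. For $u\in\mathcal{A}^F$ and an interval $I\subset F$, $u_I$ denotes the restriction of $u$ to $I$, read as a word; $W_n(u)=\{u_I: I\in\mathcal{C}_n(F)\}$ is the set of distinct words of length $n$ appearing in $u$. A pair $(I_1,I_2)\in\mathcal{C}_n(F)\times\mathcal{C}_n(F)$ is an $n$-repeat for $u$ if $u_{I_1}=u_{I_2}$, $I_1\neq I_2$, and $I_1$ is the lexicographically (leftmost) minimal occurrence of the word $u_{I_1}$ in $u$. For $\mathcal{R}\subset\mathcal{C}_n(F)\times\mathcal{C}_n(F)$, $A(\mathcal{R})=\bigcup_{(I_1,I_2)\in\mathcal{R}}I_2$. $\mathcal{R}$ is an $n$-repeat cover for $u$ if every pair in $\mathcal{R}$ is an $n$-repeat for $u$ and for every $n$-repeat $(I_1,I_2)$ for $u$ we have $I_2\subset A(\mathcal{R})$. *)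

theory Defs
  imports Main
begin

definition intv :: "int \<Rightarrow> nat \<Rightarrow> int set" where
  "intv t n = {t..<t + int n}"

definition Cn :: "nat \<Rightarrow> int set \<Rightarrow> int set set" where
  "Cn n F = {intv t n | t. intv t n \<subseteq> F}"

definition word :: "(int \<Rightarrow> 'a) \<Rightarrow> nat \<Rightarrow> int set \<Rightarrow> 'a list" where
  "word u n I = map (\<lambda>i. u (Min I + int i)) [0..<n]"

definition Wn :: "nat \<Rightarrow> int set \<Rightarrow> (int \<Rightarrow> 'a) \<Rightarrow> 'a list set" where
  "Wn n F u = word u n ` Cn n F"

definition is_repeat :: "nat \<Rightarrow> int set \<Rightarrow> (int \<Rightarrow> 'a) \<Rightarrow> int set \<Rightarrow> int set \<Rightarrow> bool" where
  "is_repeat n F u I1 I2 \<longleftrightarrow>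
     I1 \<in> Cn n F \<and> I2 \<in> Cn n F \<and> word u n I1 = word u n I2 \<and> I1 \<noteq> I2 \<and>
     (\<forall>I \<in> Cn n F. word u n I = word u n I1 \<longrightarrow> Min I1 \<le> Min I)"

definition Aset :: "(int set \<times> int set) set \<Rightarrow> int set" where
  "Aset R = (\<Union>(I1, I2) \<in> R. I2)"

definition is_repeat_cover ::
  "nat \<Rightarrow> int set \<Rightarrow> (int \<Rightarrow> 'a) \<Rightarrow> (int set \<times> int set) set \<Rightarrow> bool" where
  "is_repeat_cover n F u R \<longleftrightarrow>
     (\<forall>(I1, I2) \<in> R. is_repeat n F u I1 I2) \<and>
     (\<forall>I1 I2. is_repeat n F u I1 I2 \<longrightarrow> I2 \<subseteq> Aset R)"

end

theory Submission
  imports Defs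
begin

lemma Min_intv: "0 < n \<Longrightarrow> Min (intv s n) = s"
  unfolding intv_def by (intro Min_eqI) auto

lemma intv_inj: "0 < n \<Longrightarrow> intv s n = intv s' n \<Longrightarrow> s = s'"
  by (metis Min_intv)

lemma union_card:
  assumes "finite X" "X \<noteq> {}" "0 < n"
  shows "card X + n - 1 \<le> card (\<Union>s\<in>X. intv s n)"
proof -
  define M where "M = Max X"
  have MX: "M \<in> X" using assms M_def by simp
  have le: "\<And>x. x \<in> X \<Longrightarrow> x \<le> M" using assms M_def by simp
  have sub: "X \<union> {M+1..<M + int n} \<subseteq> (\<Union>s\<in>X. intv s n)"
  proof
    fix x assume "x \<in> X \<union> {M+1..<M + int n}"
    then show "x \<in> (\<Union>s\<in>X. intv s n)"
    proof
      assume "x \<in> X" then show ?thesis using assms(3) unfolding intv_def by force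
    next
      assume "x \<in> {M+1..<M + int n}"
      then have "x \<in> intv M n" unfolding intv_def by auto
      then show ?thesis using MX by blast
    qed
  qed
  have disj: "X \<inter> {M+1..<M + int n} = {}" using le by fastforce
  have "card (X \<union> {M+1..<M + int n}) = card X + (n - 1)"
    using card_Un_disjoint[OF assms(1) _ disj] by simp
  moreover have "finite (\<Union>s\<in>X. intv s n)" using assms(1) unfolding intv_def by auto
  ultimately have "card X + (n - 1) \<le> card (\<Union>s\<in>X. intv s n)"
    using card_mono[OF _ sub] by metis
  then show ?thesis using assms(3) by simp
qed

theorem mainTheorem4:
  fixes n :: nat and F :: "int set" and u :: "int \<Rightarrow> 'a::finite"
    and R :: "(int set \<times> int set) set" and T :: "int set" and a j :: nat
  assumes "0 < n"
    and "finite T" and "F = (\<Union>t\<in>T. intv t n)"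
    and "a = card {s. intv s n \<subseteq> F}"
    and "card (Wn n F u) = j" and "j < a"
    and "is_repeat_cover n F u R"
  shows "card (Aset R) \<ge> a + n - j - 1"
proof -
  define S where "S = {s. intv s n \<subseteq> F}"
  define wd where "wd s = word u n (intv s n)" for s
  define S' where "S' = {s \<in> S. \<exists>s0\<in>S. s0 < s \<and> wd s0 = wd s}"
  have finF: "finite F" using assms(2,3) unfolding intv_def by auto
  have SF: "S \<subseteq> F" using assms(1) unfolding S_def intv_def by auto
  have finS: "finite S" using finF SF finite_subset by blast
  have CnS: "Cn n F = (\<lambda>s. intv s n) ` S" unfolding Cn_def S_def by auto
  have W: "Wn n F u = wd ` S" unfolding Wn_def CnS wd_def by auto
  have inj: "inj_on wd (S - S')"
  proof (rule inj_onI)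
    fix x y assume "x \<in> S - S'" "y \<in> S - S'" "wd x = wd y"
    then show "x = y" unfolding S'_def by (cases x y rule: linorder_cases) auto
  qed
  have "card (S - S') \<le> j"
  proof -
    have "card (S - S') = card (wd ` (S - S'))" using card_image[OF inj] by simp
    also have "\<dots> \<le> card (wd ` S)" by (intro card_mono) (use finS in auto)
    finally show ?thesis using assms(5) W by simp
  qed
  moreover have "S' \<subseteq> S" unfolding S'_def by auto
  moreover have "card (S - S') = card S - card S'"
    using card_Diff_subset[OF finite_subset[OF \<open>S' \<subseteq> S\<close> finS] \<open>S' \<subseteq> S\<close>] .
  moreover have "card S' \<le> card S" using card_mono[OF finS \<open>S' \<subseteq> S\<close>] .
  ultimately have cS': "card S' \<ge> a - j" using assms(4) unfolding S_def[symmetric] by linarith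
  have finS': "finite S'" using finS \<open>S' \<subseteq> S\<close> finite_subset by blast
  have ne: "S' \<noteq> {}" using cS' assms(6) by auto
  have cover: "(\<Union>s\<in>S'. intv s n) \<subseteq> Aset R"
  proof (rule UN_least)
    fix s assume "s \<in> S'"
    then have sS: "s \<in> S" and ex: "\<exists>s0\<in>S. s0 < s \<and> wd s0 = wd s" unfolding S'_def by auto
    define Oc where "Oc = {s0 \<in> S. wd s0 = wd s}"
    have finO: "finite Oc" using finS unfolding Oc_def by auto
    have neO: "Oc \<noteq> {}" using sS unfolding Oc_def by auto
    define m where "m = Min Oc"
    have mO: "m \<in> Oc" using finO neO m_def by simp
    have mle: "\<And>x. x \<in> Oc \<Longrightarrow> m \<le> x" using finO m_def by simp
    have "m < s" using ex mle unfolding Oc_def by fastforce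
    have rep: "is_repeat n F u (intv m n) (intv s n)"
      unfolding is_repeat_def
    proof (intro conjI ballI impI)
      show "intv m n \<in> Cn n F" using mO unfolding Oc_def CnS by auto
      show "intv s n \<in> Cn n F" using sS unfolding CnS by auto
      show "word u n (intv m n) = word u n (intv s n)" using mO unfolding Oc_def wd_def by auto
      show "intv m n \<noteq> intv s n" using \<open>m < s\<close> intv_inj[OF assms(1), of m s] by auto
    next
      fix I assume "I \<in> Cn n F" "word u n I = word u n (intv m n)"
      then obtain t where t: "t \<in> S" "I = intv t n" unfolding CnS by auto
      have "t \<in> Oc" using t \<open>word u n I = _\<close> mO unfolding Oc_def wd_def by auto
      then show "Min (intv m n) \<le> Min I" using mle t Min_intv[OF assms(1)] by simp
    qed
    then show "intv s n \<subseteq> Aset R" using assms(7) unfolding is_repeat_cover_def by blast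
  qed
  have finA: "finite (Aset R)"
  proof -
    have "Aset R \<subseteq> F" using assms(7) unfolding is_repeat_cover_def Aset_def is_repeat_def Cn_def
      by fastforce
    then show ?thesis using finF finite_subset by blast
  qed
  have "card S' + n - 1 \<le> card (Aset R)"
    using union_card[OF finS' ne assms(1)] card_mono[OF finA cover] by linarith
  then show ?thesis using cS' by linarith
qed

end
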